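(* Let $\mathcal{T}$ be a planar rectilinear mesh with convex polygonal faces, $m\in\mathbb{Z}_{\ge0}$, $r\in\mathbb{Z}_{\ge-1}$, and $\mathbf r$ a smoothness distribution with values in $\{r,-1\}$ on interior edges. Let $\sigma$ be a face bounded by interior edges $\tau_1,\dots,\tau_k$ with $\mathbf r(\tau_i)=r$, let $\gamma_i=\tau_i\cap\tau_{i+1}$ (indices cyclic in $1,\dots,k$) be interior vertices, and let $\ell_i$ be an affine-linear form vanishing on $\tau_i$. Let $\mathbf s$ agree with $\mathbf r$ except $\mathbf s(\tau_i)=-1$ for $i=1,\dots,k$, and let $$\phi:\bigoplus_{i=1}^k{\mathcal{P}}_m/\langle\ell_i^{r+1}\rangle\longrightarrow\bigoplus_{i=1}^k{\mathcal{P}}_m/\mathfrak{J}^{\mathbf r}_{\gamma_i},\qquad (a_1,\dots,a_k)\mapsto(-a_1+a_2,\,-a_2+a_3,\,\dots,\,-a_{k-1}+a_k,\,a_1-a_k)$$ be the nontrivial map of the complex $\mathcal{I}^{\mathbf s}/\mathcal{I}^{\mathbf r}$. Then the cokernel of $\phi$ (and hence $H_0(\mathcal{I}^{\mathbf s}/\mathcal{I}^{\mathbf r})$) is isomorphic to ${\mathcal{P}}_m/(\mathfrak{J}^{\mathbf r}_{\gamma_1}+\cdots+\mathfrak{J}^{\mathbf r}_{\gamma_k})$.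
   Context: $\mathcal{T}$ is a finite subdivision of a closed polygonal region $\Omega\subset\mathbb{R}^2$ (possibly not simply connected) into convex polygonal faces meeting along straight edges and vertices. An edge or vertex is interior if not contained in $\partial\Omega$; $\mathcal{T}^\circ_1,\mathcal{T}^\circ_0$ denote interior edges and vertices. ${\mathcal{P}}_m$ is the space of real bivariate polynomials of total degree at most $m$; $\langle f_1,\dots,f_j\rangle$ denotes the subspace of ${\mathcal{P}}_m$ of polynomial combinations $\sum g_if_i$ lying in ${\mathcal{P}}_m$. A smoothness distribution is a map $\mathbf{r}:\mathcal{T}^\circ_1\to\mathbb{Z}_{\ge -1}$. For $\tau\in\mathcal{T}^\circ_1$ with vanishing affine-linear form $\ell_\tau$, $\mathfrak{J}^{\mathbf r}_\tau=\langle \ell_\tau^{\mathbf r(\tau)+1}\rangle$ (equal to ${\mathcal{P}}_m$ if $\mathbf r(\tau)=-1$); for $\gamma\in\mathcal{T}^\circ_0$, $\mathfrak{J}^{\mathbf r}_\gamma=\sum_{\tau\ni\gamma}\mathfrak{J}^{\mathbf r}_\tau$. $\mathcal{I}^{\mathbf r}$ is the chain complex $0\to\bigoplus_{\tau\in\mathcal{T}^\circ_1}\mathfrak{J}^{\mathbf r}_\tau\to\bigoplus_{\gamma\in\mathcal{T}^\circ_0}\mathfrak{J}^{\mathbf r}_\gamma$ (degrees $2,1,0$) whose nonzero map is the cellular boundary map relative to $\partial\Omega$ (signs $\pm1$ from fixed edge orientations); for $\mathbf s\le\mathbf r$ pointwise, $\mathcal{I}^{\mathbf s}/\mathcal{I}^{\mathbf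 r}$ is the quotient complex. *)

theory Defs
  imports "HOL-Analysis.Analysis" "HOL-Library.Function_Algebras"
begin

type_synonym pt = "real \<times> real"
type_synonym bpoly = "pt \<Rightarrow> real"

text \<open>Real bivariate polynomials of total degree at most m, as polynomial functions
  on the plane (a real polynomial is determined by its function).\<close>
definition Pm :: "nat \<Rightarrow> bpoly set" where
  "Pm m = {f. \<exists>c :: nat \<Rightarrow> nat \<Rightarrow> real. \<forall>x y.
              f (x, y) = (\<Sum>(i, j)\<in>{(i, j). i + j \<le> m}. c i j * x ^ i * y ^ j)}"

definition allpoly :: "bpoly set" where
  "allpoly = (\<Union>m. Pm m)"

definition gen1 :: "nat \<Rightarrow> bpoly \<Rightarrow> bpoly set" where
  "gen1 m f = {h \<in> Pm m. \<exists>g \<in> allpoly. h = (\<lambda>p. g p * f p)}"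

definition affine_form :: "bpoly \<Rightarrow> bool" where
  "affine_form l \<longleftrightarrow> (\<exists>a b c. (a, b) \<noteq> (0, 0) \<and> (\<forall>x y. l (x, y) = a * x + b * y + c))"

definition vanishes_on :: "bpoly \<Rightarrow> pt set \<Rightarrow> bool" where
  "vanishes_on l S \<longleftrightarrow> (\<forall>p\<in>S. l p = 0)"

definition J_edge :: "nat \<Rightarrow> (pt set \<Rightarrow> bpoly) \<Rightarrow> (pt set \<Rightarrow> int) \<Rightarrow> pt set \<Rightarrow> bpoly set" where
  "J_edge m ell rr \<tau> = (if rr \<tau> = -1 then Pm m
                         else gen1 m (\<lambda>p. (ell \<tau> p) ^ nat (rr \<tau> + 1)))"

definition J_vert :: "nat \<Rightarrow> pt set set \<Rightarrow> (pt set \<Rightarrow> bpoly) \<Rightarrow> (pt set \<Rightarrow> int) \<Rightarrow> pt \<Rightarrow> bpoly set" where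
  "J_vert m E ell rr \<gamma> =
     {(\<Sum>\<tau>\<in>{\<tau>\<in>E. \<gamma> \<in> \<tau>}. h \<tau>) | h. \<forall>\<tau>\<in>{\<tau>\<in>E. \<gamma> \<in> \<tau>}. h \<tau> \<in> J_edge m ell rr \<tau>}"

definition sum_spaces :: "nat \<Rightarrow> (nat \<Rightarrow> bpoly set) \<Rightarrow> bpoly set" where
  "sum_spaces k A = {(\<Sum>i<k. h i) | h. \<forall>i<k. h i \<in> A i}"

text \<open>Direct sum of A 0, ..., A (k-1), as k-tuples (functions nat => _, zero for i >= k).\<close>
definition dsum :: "nat \<Rightarrow> (nat \<Rightarrow> bpoly set) \<Rightarrow> (nat \<Rightarrow> bpoly) set" where
  "dsum k A = {b. (\<forall>i<k. b i \<in> A i) \<and> (\<forall>i\<ge>k. b i = 0)}"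

text \<open>The map phi (on representatives): (a_1..a_k) |-> (-a_1+a_2, ..., -a_{k-1}+a_k, a_1-a_k);
  0-based: component i is a ((i+1) mod k) - a i.\<close>
definition phi :: "nat \<Rightarrow> (nat \<Rightarrow> bpoly) \<Rightarrow> (nat \<Rightarrow> bpoly)" where
  "phi k a = (\<lambda>i. if i < k then a (Suc i mod k) - a i else 0)"

text \<open>Isomorphism of subquotients V/U and W/Z of real vector spaces (of functions):
  a real-linear map F on V onto W with F^{-1}(Z) \<inter> V = U; it induces V/U \<cong> W/Z,
  and every such isomorphism arises this way.\<close>
definition subquot_iso :: "(nat \<Rightarrow> bpoly) set \<Rightarrow> (nat \<Rightarrow> bpoly) set \<Rightarrow>
                           bpoly set \<Rightarrow> bpoly set \<Rightarrow> bool" where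
  "subquot_iso V U W Z \<longleftrightarrow>
     (\<exists>F. (\<forall>u\<in>V. \<forall>v\<in>V. F (u + v) = F u + F v)
        \<and> (\<forall>t::real. \<forall>u\<in>V. F (\<lambda>i p. t * u i p) = (\<lambda>p. t * F u p))
        \<and> F ` V = W
        \<and> (\<forall>u\<in>V. F u \<in> Z \<longleftrightarrow> u \<in> U))"

end

theory Submission
  imports Defs
begin

lemma Pm_zero: "(0::bpoly) \<in> Pm m"
  unfolding Pm_def by (rule CollectI, rule exI[of _ "\<lambda>i j. 0"]) simp

lemma Pm_add: "f \<in> Pm m \<Longrightarrow> g \<in> Pm m \<Longrightarrow> f + g \<in> Pm m"
proof -
  assume "f \<in> Pm m" "g \<in> Pm m"
  then obtain c d where c: "\<forall>x y. f (x, y) = (\<Sum>(i, j)\<in>{(i, j). i + j \<le> m}. c i j * x ^ i * y ^ j)"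
    and d: "\<forall>x y. g (x, y) = (\<Sum>(i, j)\<in>{(i, j). i + j \<le> m}. d i j * x ^ i * y ^ j)"
    unfolding Pm_def by blast
  show ?thesis unfolding Pm_def
  proof (rule CollectI, rule exI[of _ "\<lambda>i j. c i j + d i j"], intro allI)
    fix x y
    show "(f + g) (x, y) = (\<Sum>(i, j)\<in>{(i, j). i + j \<le> m}. (c i j + d i j) * x ^ i * y ^ j)"
      using c d by (simp add: sum.distrib[symmetric] case_prod_beta algebra_simps)
  qed
qed

lemma Pm_uminus: "f \<in> Pm m \<Longrightarrow> - f \<in> Pm m"
proof -
  assume "f \<in> Pm m"
  then obtain c where c: "\<forall>x y. f (x, y) = (\<Sum>(i, j)\<in>{(i, j). i + j \<le> m}. c i j * x ^ i * y ^ j)"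
    unfolding Pm_def by blast
  show ?thesis unfolding Pm_def
  proof (rule CollectI, rule exI[of _ "\<lambda>i j. - c i j"], intro allI)
    fix x y
    show "(- f) (x, y) = (\<Sum>(i, j)\<in>{(i, j). i + j \<le> m}. (- c i j) * x ^ i * y ^ j)"
      using c by (simp add: sum_negf[symmetric] case_prod_beta)
  qed
qed

lemma Pm_diff: "f \<in> Pm m \<Longrightarrow> g \<in> Pm m \<Longrightarrow> f - g \<in> Pm m"
  using Pm_add[of f m "- g"] Pm_uminus[of g m] by simp

lemma Pm_sum: "(\<And>i. i \<in> A \<Longrightarrow> f i \<in> Pm m) \<Longrightarrow> sum f A \<in> Pm m"
proof (induction A rule: infinite_finite_induct)
  case (infinite A) then show ?case using Pm_zero by (simp add: zero_fun_def)
next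
  case empty then show ?case using Pm_zero by (simp add: zero_fun_def)
next
  case (insert x F)
  have "f x + sum f F \<in> Pm m" using insert by (intro Pm_add) auto
  then show ?case using sum.insert[OF insert(1,2), of f] by metis
qed

lemma J_edge_Pm: "J_edge m ell rr t \<subseteq> Pm m"
  unfolding J_edge_def gen1_def by auto

lemma J_vert_Pm: "J_vert m E ell rr g \<subseteq> Pm m"
  unfolding J_vert_def using J_edge_Pm by (force intro!: Pm_sum)

lemma tele: "(\<Sum>i<k. (a (Suc i mod k) - a i) :: 'a::ab_group_add) = 0"
proof (cases k)
  case 0 then show ?thesis by simp
next
  case (Suc n)
  have "(\<Sum>i<Suc n. a (Suc i mod Suc n)) = (\<Sum>i<n. a (Suc i)) + a 0"
    by (simp add: sum.lessThan_Suc)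
  also have "\<dots> = (\<Sum>i<Suc n. a i)"
    by (metis sum.lessThan_Suc_shift add.commute)
  finally show ?thesis using Suc by (simp add: sum_subtractf)
qed

lemma sum_fun_apply: "(\<Sum>i\<in>A. (f i :: 'b \<Rightarrow> real)) p = (\<Sum>i\<in>A. f i p)"
  by (induction A rule: infinite_finite_induct) auto

theorem mainTheorem7:
  fixes m :: nat and r :: int and k :: nat
    and E :: "pt set set"            \<comment> \<open>interior edges of the mesh\<close>
    and V :: "pt set"                \<comment> \<open>interior vertices of the mesh\<close>
    and ell :: "pt set \<Rightarrow> bpoly"     \<comment> \<open>affine form vanishing on each edge\<close>
    and rr :: "pt set \<Rightarrow> int"       \<comment> \<open>smoothness distribution\<close>
    and \<sigma> :: "pt set"                \<comment> \<open>the face\<close>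
    and \<tau> :: "nat \<Rightarrow> pt set" and \<gamma> :: "nat \<Rightarrow> pt"
  assumes "finite E" and "finite V"
    and "\<forall>e\<in>E. \<exists>a b. a \<noteq> b \<and> e = closed_segment a b"
    and "\<forall>e\<in>E. affine_form (ell e) \<and> vanishes_on (ell e) e"
    and "r \<ge> -1"
    and "\<forall>e\<in>E. rr e \<in> {r, -1}"
    and "convex \<sigma>" and "compact \<sigma>" and "interior \<sigma> \<noteq> {}"
    and "frontier \<sigma> = (\<Union>i<k. \<tau> i)"
    and "inj_on \<tau> {..<k}"
    and "\<forall>i<k. \<tau> i \<in> E \<and> rr (\<tau> i) = r"
    and "\<forall>i<k. \<gamma> i \<in> V \<and> \<tau> i \<inter> \<tau> (Suc i mod k) = {\<gamma> i}"
  shows "subquot_iso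
           (dsum k (\<lambda>_. Pm m))
           {j + phi k a | j a. j \<in> dsum k (\<lambda>i. J_vert m E ell rr (\<gamma> i))
                               \<and> a \<in> dsum k (\<lambda>_. Pm m)}
           (Pm m)
           (sum_spaces k (\<lambda>i. J_vert m E ell rr (\<gamma> i)))"
proof -
  let ?J = "\<lambda>i. J_vert m E ell rr (\<gamma> i)"
  have k0: "k > 0"
  proof (rule ccontr)
    assume "\<not> k > 0"
    then have "frontier \<sigma> = {}" using assms(10) by simp
    moreover have "\<sigma> \<noteq> {}" using assms(9) interior_subset by blast
    moreover have "\<sigma> \<noteq> UNIV" using compact_imp_bounded[OF assms(8)] not_bounded_UNIV by blast
    ultimately show False using frontier_eq_empty by blast
  qed
  define F where "F = (\<lambda>u::nat \<Rightarrow> bpoly. \<Sum>i<k. u i)"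
  have lin1: "\<forall>u\<in>dsum k (\<lambda>_. Pm m). \<forall>v\<in>dsum k (\<lambda>_. Pm m). F (u + v) = F u + F v"
    unfolding F_def by (simp add: sum.distrib)
  have lin2: "\<forall>t::real. \<forall>u\<in>dsum k (\<lambda>_. Pm m). F (\<lambda>i p. t * u i p) = (\<lambda>p. t * F u p)"
    unfolding F_def by (simp add: fun_eq_iff sum_fun_apply sum_distrib_left)
  have img: "F ` dsum k (\<lambda>_. Pm m) = Pm m"
  proof
    show "F ` dsum k (\<lambda>_. Pm m) \<subseteq> Pm m"
      unfolding F_def dsum_def by (auto intro!: Pm_sum)
    show "Pm m \<subseteq> F ` dsum k (\<lambda>_. Pm m)"
    proof
      fix p assume p: "p \<in> Pm m"
      let ?u = "\<lambda>i. if i = 0 then p else 0"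
      have "?u \<in> dsum k (\<lambda>_. Pm m)" unfolding dsum_def using p k0 Pm_zero by auto
      moreover have "F ?u = p" unfolding F_def using k0
        by (simp add: sum.delta)
      ultimately show "p \<in> F ` dsum k (\<lambda>_. Pm m)" by (metis image_eqI)
    qed
  qed
  have key: "\<forall>u\<in>dsum k (\<lambda>_. Pm m). F u \<in> sum_spaces k ?J \<longleftrightarrow>
     u \<in> {j + phi k a | j a. j \<in> dsum k ?J \<and> a \<in> dsum k (\<lambda>_. Pm m)}"
  proof (intro ballI iffI)
    fix u assume u: "u \<in> dsum k (\<lambda>_. Pm m)" and Fu: "F u \<in> sum_spaces k ?J"
    then obtain h where h: "\<forall>i<k. h i \<in> ?J i" and hs: "F u = (\<Sum>i<k. h i)"
      unfolding sum_spaces_def by blast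
    define j where "j = (\<lambda>i. if i < k then h i else 0)"
    define d where "d = u - j"
    define a where "a = (\<lambda>i. if i < k then (\<Sum>l<i. d l) else 0)"
    have jJ: "j \<in> dsum k ?J" unfolding j_def dsum_def using h by auto
    have dP: "\<And>i. d i \<in> Pm m"
    proof -
      fix i show "d i \<in> Pm m"
      proof (cases "i < k")
        case True
        then have "h i \<in> Pm m" using h J_vert_Pm by blast
        then show ?thesis unfolding d_def j_def using u True
          by (auto simp: dsum_def intro!: Pm_diff)
      next
        case False
        then show ?thesis unfolding d_def j_def using u Pm_zero by (auto simp: dsum_def)
      qed
    qed
    have aP: "a \<in> dsum k (\<lambda>_. Pm m)" unfolding a_def dsum_def using dP Pm_zero by (auto intro!: Pm_sum)
    have dsum0: "(\<Sum>l<k. d l) = 0"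
      unfolding d_def using hs unfolding F_def j_def by (simp add: sum_subtractf)
    have "u = j + phi k a"
    proof
      fix i
      show "u i = (j + phi k a) i"
      proof (cases "i < k")
        case False
        then show ?thesis using u unfolding j_def phi_def dsum_def by auto
      next
        case True
        have "phi k a i = d i"
        proof (cases "Suc i < k")
          case True
          then show ?thesis unfolding phi_def a_def by simp
        next
          case False
          with \<open>i < k\<close> have ik: "k = Suc i" by simp
          have "(\<Sum>l<Suc i. d l) = 0" using dsum0 ik by simp
          then have "d i = - (\<Sum>l<i. d l)" by (simp add: eq_neg_iff_add_eq_0 add.commute)
          then show ?thesis unfolding phi_def a_def using ik by simp
        qed
        then show ?thesis unfolding d_def by simp
      qed
    qed
    then show "u \<in> {j + phi k a | j a. j \<in> dsum k ?J \<and> a \<in> dsum k (\<lambda>_. Pm m)}"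
      using jJ aP by blast
  next
    fix u assume "u \<in> {j + phi k a | j a. j \<in> dsum k ?J \<and> a \<in> dsum k (\<lambda>_. Pm m)}"
    then obtain j a where ja: "u = j + phi k a" "j \<in> dsum k ?J" by blast
    have "F u = (\<Sum>i<k. j i) + (\<Sum>i<k. a (Suc i mod k) - a i)"
      unfolding F_def ja(1) phi_def by (simp add: sum.distrib)
    also have "\<dots> = (\<Sum>i<k. j i)" by (simp add: tele)
    finally show "F u \<in> sum_spaces k ?J" using ja(2) unfolding sum_spaces_def dsum_def by blast
  qed
  show ?thesis unfolding subquot_iso_def
    using lin1 lin2 img key by blast
qed

end
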